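(* Let $n\ge 1$ be an integer and suppose that $A\subseteq\mathbb{Z}_5^n$ is a sum-free subset of size $|A|>\frac32\cdot5^{n-1}$. If $H<\mathbb{Z}_5^n$ is a maximal proper subgroup such that every $H$-coset $g+H$ satisfies $|A\cap(g+H)|<\frac12|H|$, then there is at most one $H$-coset $g+H$ with $|A\cap(g+H)|>\frac25|H|$.
   Context: $\mathbb{Z}_5^n$ denotes the elementary abelian $5$-group of rank $n$. A subset $S$ of an abelian group is sum-free if there are no $x,y,z\in S$ (not necessarily distinct) with $x+y=z$. *)

theory Defs
  imports "HOL-Analysis.Analysis" "HOL-Library.Numeral_Type"
begin

text \<open>The group Z_5^n is modelled as the type 5 ^ 'n (vectors indexed by a finite
type 'n with CARD('n) = n, with entries in the ring Z/5Z = type 5).\<close>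

definition sum_free :: "'a::plus set \<Rightarrow> bool" where
  "sum_free S \<longleftrightarrow> \<not> (\<exists>x\<in>S. \<exists>y\<in>S. \<exists>z\<in>S. x + y = z)"

definition add_subgroup :: "'a::ab_group_add set \<Rightarrow> bool" where
  "add_subgroup H \<longleftrightarrow> 0 \<in> H \<and> (\<forall>x\<in>H. \<forall>y\<in>H. x + y \<in> H) \<and> (\<forall>x\<in>H. - x \<in> H)"

definition maximal_proper_subgroup :: "'a::ab_group_add set \<Rightarrow> bool" where
  "maximal_proper_subgroup H \<longleftrightarrow> add_subgroup H \<and> H \<noteq> UNIV \<and>
     (\<forall>K. add_subgroup K \<and> H \<subseteq> K \<longrightarrow> K = H \<or> K = UNIV)"

definition coset :: "'a::plus \<Rightarrow> 'a set \<Rightarrow> 'a set" where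
  "coset g H = (\<lambda>h. g + h) ` H"

end

theory Submission
  imports Defs "HOL-Computational_Algebra.Primes"
begin


definition ss :: "'a::ab_group_add set \<Rightarrow> 'a set \<Rightarrow> 'a set" where
  "ss X Y = (\<lambda>(x,y). x + y) ` (X \<times> Y)"

lemma ss_iff: "z \<in> ss X Y \<longleftrightarrow> (\<exists>x\<in>X. \<exists>y\<in>Y. z = x + y)"
  unfolding ss_def by force

lemma ssI: "x \<in> X \<Longrightarrow> y \<in> Y \<Longrightarrow> x + y \<in> ss X Y"
  by (auto simp: ss_iff)

lemma finite_ss: "finite X \<Longrightarrow> finite Y \<Longrightarrow> finite (ss X Y)"
  unfolding ss_def by simp

lemma ss_mono: "X \<subseteq> X' \<Longrightarrow> Y \<subseteq> Y' \<Longrightarrow> ss X Y \<subseteq> ss X' Y'"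
  unfolding ss_def by auto

lemma ss_Un: "ss (X \<union> Y) B = ss X B \<union> ss Y B"
  unfolding ss_def by auto

lemma ss_single: "ss {x} B = (\<lambda>b. x + b) ` B"
  unfolding ss_def by auto

lemma card_ss_single: "card (ss {x} B) = card B"
  unfolding ss_single by (rule card_image) (auto simp: inj_on_def)

lemma ss_transl: "ss ((\<lambda>x. x + g) ` X) B = (\<lambda>z. z + g) ` ss X B"
  unfolding ss_def by (auto simp: image_iff algebra_simps) (metis add.assoc add.commute)+

lemma card_transl: "card ((\<lambda>x. x + (g::'a::ab_group_add)) ` X) = card X"
  by (rule card_image) (auto simp: inj_on_def)

lemma card_neg: "card (uminus ` (X::'a::ab_group_add set)) = card X"
  by (rule card_image) (auto simp: inj_on_def)

lemma card_dvd_periodic: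
  fixes H0 T :: "'a::ab_group_add set"
  assumes sg: "add_subgroup H0" and fH: "finite H0" and fT: "finite T"
    and per: "\<forall>t\<in>T. \<forall>h\<in>H0. t + h \<in> T"
  shows "card H0 dvd card T"
proof -
  have z: "0 \<in> H0" and ad: "\<And>x y. x \<in> H0 \<Longrightarrow> y \<in> H0 \<Longrightarrow> x + y \<in> H0"
    and ng: "\<And>x. x \<in> H0 \<Longrightarrow> - x \<in> H0"
    using sg by (auto simp: add_subgroup_def)
  define C where "C = (\<lambda>t. (\<lambda>h. t + h) ` H0) ` T"
  have fC: "finite C" using fT by (simp add: C_def)
  have UC: "\<Union>C = T"
  proof
    show "\<Union>C \<subseteq> T" using per by (auto simp: C_def)
    show "T \<subseteq> \<Union>C"
    proof
      fix t assume "t \<in> T"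
      then have "t \<in> (\<lambda>h. t + h) ` H0" using z by force
      then show "t \<in> \<Union>C" using \<open>t \<in> T\<close> by (auto simp: C_def)
    qed
  qed
  have cc: "\<forall>c\<in>C. card c = card H0"
    by (auto simp: C_def intro!: card_image simp: inj_on_def)
  have dj: "\<forall>c1\<in>C. \<forall>c2\<in>C. c1 \<noteq> c2 \<longrightarrow> c1 \<inter> c2 = {}"
  proof (intro ballI impI)
    fix c1 c2 assume c1: "c1 \<in> C" and c2: "c2 \<in> C" and ne: "c1 \<noteq> c2"
    obtain t1 where t1: "c1 = (\<lambda>h. t1 + h) ` H0" using c1 by (auto simp: C_def)
    obtain t2 where t2: "c2 = (\<lambda>h. t2 + h) ` H0" using c2 by (auto simp: C_def)
    show "c1 \<inter> c2 = {}"
    proof (rule ccontr)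
      assume "c1 \<inter> c2 \<noteq> {}"
      then obtain h1 h2 where h1: "h1 \<in> H0" and h2: "h2 \<in> H0" and eq: "t1 + h1 = t2 + h2"
        using t1 t2 by auto
      have d: "t1 - t2 \<in> H0"
      proof -
        have "h2 + - h1 \<in> H0" using ad[OF h2 ng[OF h1]] .
        moreover have "t1 - t2 = h2 + - h1" using eq by (simp add: algebra_simps)
        ultimately show ?thesis by metis
      qed
      have "c1 \<subseteq> c2"
      proof
        fix x assume "x \<in> c1"
        then obtain h where h: "h \<in> H0" "x = t1 + h" using t1 by auto
        have eq: "x = t2 + ((t1 - t2) + h)" using h by simp
        have mem: "(t1 - t2) + h \<in> H0" using ad[OF d h(1)] .
        show "x \<in> c2" unfolding t2 using eq mem by blast
      qed
      moreover have "c2 \<subseteq> c1"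
      proof
        fix x assume "x \<in> c2"
        then obtain h where h: "h \<in> H0" "x = t2 + h" using t2 by auto
        have eq: "x = t1 + (- (t1 - t2) + h)" using h by simp
        have mem: "- (t1 - t2) + h \<in> H0" using ad[OF ng[OF d] h(1)] .
        show "x \<in> c1" unfolding t1 using eq mem by blast
      qed
      ultimately show False using ne by auto
    qed
  qed
  have "card H0 * card C = card (\<Union>C)"
    by (rule card_partition) (use fC UC fT cc dj in auto)
  then show ?thesis using UC by (metis dvd_triv_left)
qed

locale fsg =
  fixes S :: "'a::ab_group_add set"
  assumes sub: "add_subgroup S" and fin: "finite S"
begin

lemma zS: "0 \<in> S" using sub by (simp add: add_subgroup_def)
lemma addS: "x \<in> S \<Longrightarrow> y \<in> S \<Longrightarrow> x + y \<in> S" using sub by (simp add: add_subgroup_def)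
lemma negS: "x \<in> S \<Longrightarrow> - x \<in> S" using sub by (simp add: add_subgroup_def)
lemma diffS: "x \<in> S \<Longrightarrow> y \<in> S \<Longrightarrow> x - y \<in> S"
  using addS negS by (metis diff_conv_add_uminus)

lemma negS_img: "uminus ` S = S"
proof
  show "uminus ` S \<subseteq> S" using negS by auto
  show "S \<subseteq> uminus ` S"
  proof
    fix x assume "x \<in> S" then have "- x \<in> S" by (rule negS)
    then show "x \<in> uminus ` S" by (metis image_eqI minus_minus)
  qed
qed

lemma ss_sub: "X \<subseteq> S \<Longrightarrow> B \<subseteq> S \<Longrightarrow> ss X B \<subseteq> S"
  unfolding ss_def using addS by auto

definition adm where "adm B X \<longleftrightarrow> X \<subseteq> S \<and> X \<noteq> {} \<and> ss X B \<noteq> S"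
definition fv where "fv B X = int (card (ss X B)) - int (card X)"
definition kap where "kap B = Min (fv B ` {X. adm B X})"
definition frag where "frag B X \<longleftrightarrow> adm B X \<and> fv B X = kap B"
definition alp where "alp B = Min (card ` {X. frag B X})"
definition good where "good B \<longleftrightarrow> B \<subseteq> S \<and> B \<noteq> {} \<and> B \<noteq> S"

lemma neg_neg_img: "uminus ` uminus ` (B::'a set) = B"
  by (simp add: image_image)

lemma good_neg: assumes "good B" shows "good (uminus ` B)"
proof -
  have "uminus ` B \<subseteq> S" using assms negS by (auto simp: good_def)
  moreover have "uminus ` B \<noteq> {}" using assms by (auto simp: good_def)
  moreover have "uminus ` B \<noteq> S"
  proof
    assume "uminus ` B = S"
    then have "B = uminus ` S" by (metis neg_neg_img)
    then show False using assms negS_img by (auto simp: good_def)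
  qed
  ultimately show ?thesis by (simp add: good_def)
qed

lemma adm_fin: "finite {X. adm B X}"
proof -
  have "{X. adm B X} \<subseteq> Pow S" by (auto simp: adm_def)
  then show ?thesis using fin by (meson finite_Pow_iff finite_subset)
qed

lemma frag_fin: "finite {X. frag B X}"
  by (rule finite_subset[OF _ adm_fin[of B]]) (auto simp: frag_def)

lemma adm_0: "good B \<Longrightarrow> adm B {0}"
  using zS by (auto simp: adm_def good_def ss_single)

lemma kap_le: "adm B X \<Longrightarrow> kap B \<le> fv B X"
  unfolding kap_def using adm_fin by (intro Min_le) auto

lemma kap_ex: assumes "good B" shows "\<exists>X. adm B X \<and> fv B X = kap B"
proof -
  have "kap B \<in> fv B ` {X. adm B X}"
    unfolding kap_def using adm_fin adm_0[OF assms] by (intro Min_in) auto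
  then show ?thesis by auto
qed

lemma frag_ex: "good B \<Longrightarrow> \<exists>X. frag B X"
  using kap_ex by (auto simp: frag_def)

lemma alp_le: "frag B X \<Longrightarrow> alp B \<le> card X"
  unfolding alp_def using frag_fin by (intro Min_le) auto

lemma alp_ex: assumes "good B" shows "\<exists>X. frag B X \<and> card X = alp B"
proof -
  have "alp B \<in> card ` {X. frag B X}"
    unfolding alp_def using frag_fin frag_ex[OF assms] by (intro Min_in) auto
  then show ?thesis by auto
qed

lemma finS: "X \<subseteq> S \<Longrightarrow> finite X" using fin finite_subset by blast

lemma kap_le_card: assumes "good B" shows "kap B \<le> int (card B) - 1"
proof -
  have "kap B \<le> fv B {0}" using adm_0[OF assms] by (rule kap_le)
  also have "fv B {0} = int (card B) - 1" by (simp add: fv_def card_ss_single)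
  finally show ?thesis .
qed

lemma dual:
  assumes g: "good B" and a: "adm B X"
  shows "adm (uminus ` B) (S - ss X B) \<and> fv (uminus ` B) (S - ss X B) \<le> fv B X"
proof -
  let ?Y = "S - ss X B"
  have BS: "B \<subseteq> S" using g by (simp add: good_def)
  have XS: "X \<subseteq> S" and Xne: "X \<noteq> {}" and XB: "ss X B \<noteq> S" using a by (auto simp: adm_def)
  have s1: "ss X B \<subseteq> S" using ss_sub[OF XS BS] .
  have Yne: "?Y \<noteq> {}" using s1 XB by auto
  have key: "ss ?Y (uminus ` B) \<subseteq> S - X"
  proof
    fix z assume "z \<in> ss ?Y (uminus ` B)"
    then obtain y b where y: "y \<in> ?Y" and b: "b \<in> B" and z: "z = y + - b"
      unfolding ss_def by auto
    have zS: "z \<in> S" using z diffS[of y b] y b BS by auto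
    have "z \<notin> X"
    proof
      assume "z \<in> X"
      then have "z + b \<in> ss X B" using b by (rule ssI)
      moreover have "z + b = y" using z by simp
      ultimately show False using y by simp
    qed
    then show "z \<in> S - X" using zS by simp
  qed
  have ne2: "ss ?Y (uminus ` B) \<noteq> S"
  proof
    assume "ss ?Y (uminus ` B) = S"
    then have "S \<subseteq> S - X" using key by simp
    then show False using XS Xne by blast
  qed
  have c1: "card (ss ?Y (uminus ` B)) \<le> card (S - X)"
    using key fin by (intro card_mono) auto
  have c2: "card (S - X) = card S - card X" using XS fin by (simp add: card_Diff_subset finS)
  have c3: "card ?Y = card S - card (ss X B)" using s1 fin by (simp add: card_Diff_subset finS)
  have c4: "card X \<le> card S" using XS fin by (simp add: card_mono)
  have c5: "card (ss X B) \<le> card S" using s1 fin by (simp add: card_mono)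
  have "fv (uminus ` B) ?Y \<le> fv B X"
    unfolding fv_def using c1 c2 c3 c4 c5 by linarith
  moreover have "adm (uminus ` B) ?Y" using Yne ne2 by (auto simp: adm_def)
  ultimately show ?thesis by simp
qed

lemma kap_neg_le: assumes g: "good B" shows "kap (uminus ` B) \<le> kap B"
proof -
  obtain X where a: "adm B X" and f: "fv B X = kap B" using kap_ex[OF g] by auto
  from dual[OF g a] have "kap (uminus ` B) \<le> fv (uminus ` B) (S - ss X B)"
    using kap_le by blast
  also have "\<dots> \<le> kap B" using dual[OF g a] f by simp
  finally show ?thesis .
qed

lemma kap_neg: assumes g: "good B" shows "kap (uminus ` B) = kap B"
  using kap_neg_le[OF g] kap_neg_le[OF good_neg[OF g]] by (simp add: neg_neg_img)

lemma frag_dual: assumes g: "good B" and f: "frag B X"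
  shows "frag (uminus ` B) (S - ss X B)"
proof -
  have a: "adm B X" and e: "fv B X = kap B" using f by (auto simp: frag_def)
  have a2: "adm (uminus ` B) (S - ss X B)" using dual[OF g a] by simp
  have "fv (uminus ` B) (S - ss X B) \<le> kap (uminus ` B)"
    using dual[OF g a] e kap_neg[OF g] by simp
  moreover have "kap (uminus ` B) \<le> fv (uminus ` B) (S - ss X B)" using a2 by (rule kap_le)
  ultimately show ?thesis using a2 by (simp add: frag_def)
qed

lemma submod:
  assumes XS: "X \<subseteq> S" and YS: "Y \<subseteq> S" and BS: "B \<subseteq> S"
  shows "fv B (X \<inter> Y) + fv B (X \<union> Y) \<le> fv B X + fv B Y"
proof -
  have fX: "finite X" and fY: "finite Y" using XS YS finS by auto
  have fB: "finite B" using BS finS by auto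
  have fXB: "finite (ss X B)" and fYB: "finite (ss Y B)" using fX fY fB finite_ss by auto
  have i1: "card (ss (X \<inter> Y) B) \<le> card (ss X B \<inter> ss Y B)"
  proof (rule card_mono)
    show "finite (ss X B \<inter> ss Y B)" using fXB by simp
    show "ss (X \<inter> Y) B \<subseteq> ss X B \<inter> ss Y B"
      using ss_mono[of "X \<inter> Y" X B B] ss_mono[of "X \<inter> Y" Y B B] by blast
  qed
  have i2: "card (ss (X \<union> Y) B) = card (ss X B \<union> ss Y B)" by (simp add: ss_Un)
  have i3: "card (ss X B \<union> ss Y B) + card (ss X B \<inter> ss Y B) = card (ss X B) + card (ss Y B)"
    using fXB fYB by (rule card_Un_Int[symmetric])
  have i4: "card (X \<union> Y) + card (X \<inter> Y) = card X + card Y"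
    using fX fY by (rule card_Un_Int[symmetric])
  show ?thesis unfolding fv_def using i1 i2 i3 i4 by linarith
qed

lemma frag_Int:
  assumes g: "good B" and fX: "frag B X" and fY: "frag B Y" and ne: "X \<inter> Y \<noteq> {}"
    and U: "ss (X \<union> Y) B \<noteq> S"
  shows "frag B (X \<inter> Y)"
proof -
  have BS: "B \<subseteq> S" using g by (simp add: good_def)
  have XS: "X \<subseteq> S" and YS: "Y \<subseteq> S" and XB: "ss X B \<noteq> S"
    using fX fY by (auto simp: frag_def adm_def)
  have s1: "ss (X \<inter> Y) B \<subseteq> ss X B" by (rule ss_mono) auto
  have "ss X B \<subseteq> S" using ss_sub[OF XS BS] .
  then have "ss (X \<inter> Y) B \<noteq> S" using s1 XB by blast
  then have a1: "adm B (X \<inter> Y)" using XS ne by (auto simp: adm_def)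
  have a2: "adm B (X \<union> Y)" using XS YS U ne by (auto simp: adm_def)
  have "fv B (X \<inter> Y) + fv B (X \<union> Y) \<le> fv B X + fv B Y" using submod XS YS BS by blast
  moreover have "kap B \<le> fv B (X \<union> Y)" using a2 by (rule kap_le)
  moreover have "kap B \<le> fv B (X \<inter> Y)" using a1 by (rule kap_le)
  ultimately have "fv B (X \<inter> Y) = kap B" using fX fY by (auto simp: frag_def)
  then show ?thesis using a1 by (simp add: frag_def)
qed

lemma frag_transl:
  assumes g: "good B" and f: "frag B X" and gS: "c \<in> S"
  shows "frag B ((\<lambda>x. x + c) ` X)"
proof -
  have BS: "B \<subseteq> S" using g by (simp add: good_def)
  have XS: "X \<subseteq> S" and Xne: "X \<noteq> {}" and XB: "ss X B \<noteq> S" and e: "fv B X = kap B"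
    using f by (auto simp: frag_def adm_def)
  have T: "ss ((\<lambda>x. x + c) ` X) B = (\<lambda>z. z + c) ` ss X B" by (rule ss_transl)
  have s1: "ss X B \<subseteq> S" using ss_sub[OF XS BS] .
  have ne: "(\<lambda>z. z + c) ` ss X B \<noteq> S"
  proof
    assume eq: "(\<lambda>z. z + c) ` ss X B = S"
    have "S \<subseteq> ss X B"
    proof
      fix s assume "s \<in> S"
      then have "s + c \<in> S" using addS gS by simp
      then obtain t where "t \<in> ss X B" "s + c = t + c" using eq by auto
      then show "s \<in> ss X B" by simp
    qed
    then show False using s1 XB by blast
  qed
  have sub2: "(\<lambda>x. x + c) ` X \<subseteq> S" using XS gS addS by auto
  have "fv B ((\<lambda>x. x + c) ` X) = fv B X"
    unfolding fv_def T card_transl by simp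
  then show ?thesis using sub2 Xne ne T e by (simp add: frag_def adm_def)
qed

lemma atom_sub:
  assumes g: "good B" and al: "alp B \<le> alp (uminus ` B)"
    and fA: "frag B A" and cA: "card A = alp B" and fF: "frag B F" and ne: "A \<inter> F \<noteq> {}"
  shows "A \<subseteq> F"
proof -
  have BS: "B \<subseteq> S" using g by (simp add: good_def)
  have AS: "A \<subseteq> S" and FS: "F \<subseteq> S" using fA fF by (auto simp: frag_def adm_def)
  have fAf: "finite A" using AS finS by auto
  have fB: "finite B" using BS finS by auto
  have U: "ss (A \<union> F) B \<noteq> S"
  proof
    assume eq: "ss (A \<union> F) B = S"
    let ?F' = "S - ss F B"
    have fr: "frag (uminus ` B) ?F'" using frag_dual[OF g fF] .
    then have "alp (uminus ` B) \<le> card ?F'" by (rule alp_le)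
    obtain z where z: "z \<in> A" "z \<in> F" using ne by auto
    have zs: "ss {z} B \<subseteq> ss F B" using z by (intro ss_mono) auto
    have zs2: "ss {z} B \<subseteq> ss A B" using z by (intro ss_mono) auto
    have "?F' \<subseteq> ss A B - ss {z} B" using eq zs by (auto simp: ss_Un)
    then have "card ?F' \<le> card (ss A B - ss {z} B)"
      using fAf fB finite_ss by (intro card_mono) auto
    also have "\<dots> = card (ss A B) - card B"
      using zs2 fAf fB finite_ss card_Diff_subset card_ss_single
      by (metis finite_subset)
    finally have c1: "card ?F' \<le> card (ss A B) - card B" .
    have cB: "card B \<le> card (ss A B)"
      using card_mono[OF _ zs2] fAf fB finite_ss card_ss_single by metis
    have "fv B A = kap B" using fA by (simp add: frag_def)
    then have "int (card (ss A B)) - int (card A) \<le> int (card B) - 1"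
      using kap_le_card[OF g] by (simp add: fv_def)
    then have "card ?F' < card A" using c1 cB by linarith
    then show False using \<open>alp (uminus ` B) \<le> card ?F'\<close> al cA by linarith
  qed
  have "frag B (A \<inter> F)" using frag_Int[OF g fA fF ne U] .
  then have "alp B \<le> card (A \<inter> F)" by (rule alp_le)
  then have "A \<inter> F = A" using fAf cA by (metis Int_lower1 card_seteq)
  then show ?thesis by blast
qed

lemma subgroup_frag_aux:
  assumes g: "good B" and al: "alp B \<le> alp (uminus ` B)"
  shows "\<exists>H0. add_subgroup H0 \<and> frag B H0"
proof -
  obtain A where fA: "frag B A" and cA: "card A = alp B" using alp_ex[OF g] by auto
  have AS: "A \<subseteq> S" and Ane: "A \<noteq> {}" using fA by (auto simp: frag_def adm_def)
  obtain a where aA: "a \<in> A" using Ane by auto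
  have aS: "- a \<in> S" using aA AS negS by auto
  define A0 where "A0 = (\<lambda>x. x + - a) ` A"
  have fA0: "frag B A0" unfolding A0_def using frag_transl[OF g fA aS] .
  have cA0: "card A0 = alp B" unfolding A0_def card_transl cA ..
  have A0S: "A0 \<subseteq> S" using fA0 by (auto simp: frag_def adm_def)
  have fin0: "finite A0" using A0S finS by auto
  have z0: "0 \<in> A0" unfolding A0_def using aA by force
  have cl: "\<And>x. x \<in> A0 \<Longrightarrow> (\<lambda>y. y + x) ` A0 = A0"
  proof -
    fix x assume x: "x \<in> A0"
    have xS: "x \<in> S" using x A0S by auto
    have fF: "frag B ((\<lambda>y. y + x) ` A0)" using frag_transl[OF g fA0 xS] .
    have "x \<in> A0 \<inter> (\<lambda>y. y + x) ` A0" using x z0 by force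
    then have sb: "A0 \<subseteq> (\<lambda>y. y + x) ` A0"
      using atom_sub[OF g al fA0 cA0 fF] by blast
    have ce: "card ((\<lambda>y. y + x) ` A0) = card A0" by (rule card_transl)
    have ff: "finite ((\<lambda>y. y + x) ` A0)" using fin0 by simp
    have "A0 = (\<lambda>y. y + x) ` A0" using card_seteq[OF ff sb] ce by simp
    then show "(\<lambda>y. y + x) ` A0 = A0" by simp
  qed
  have "add_subgroup A0"
    unfolding add_subgroup_def
  proof (intro conjI ballI)
    show "0 \<in> A0" by (rule z0)
  next
    fix x y assume x: "x \<in> A0" and y: "y \<in> A0"
    have "y + x \<in> (\<lambda>y. y + x) ` A0" using y by auto
    then show "x + y \<in> A0" using cl[OF x] by (simp add: add.commute)
  next
    fix x assume x: "x \<in> A0"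
    have "0 \<in> (\<lambda>y. y + x) ` A0" using cl[OF x] z0 by simp
    then obtain y where "y \<in> A0" "0 = y + x" by auto
    then show "- x \<in> A0" by (metis add.commute add_eq_0_iff)
  qed
  then show ?thesis using fA0 by blast
qed

lemma subgroup_frag:
  assumes g: "good B"
  shows "\<exists>H0. add_subgroup H0 \<and> frag B H0"
proof (cases "alp B \<le> alp (uminus ` B)")
  case True
  then show ?thesis using subgroup_frag_aux[OF g] by blast
next
  case False
  have g2: "good (uminus ` B)" using good_neg[OF g] .
  have "alp (uminus ` B) \<le> alp (uminus ` uminus ` B)" using False by (simp add: neg_neg_img)
  then obtain H0 where sg: "add_subgroup H0" and fH: "frag (uminus ` B) H0"
    using subgroup_frag_aux[OF g2] by blast
  have ngH: "\<And>x. x \<in> H0 \<Longrightarrow> - x \<in> H0" using sg by (simp add: add_subgroup_def)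
  have HS: "H0 \<subseteq> S" and Hne: "H0 \<noteq> {}" and HB: "ss H0 (uminus ` B) \<noteq> S"
    and e: "fv (uminus ` B) H0 = kap (uminus ` B)"
    using fH by (auto simp: frag_def adm_def)
  have eqs: "ss H0 B = uminus ` ss H0 (uminus ` B)"
  proof
    show "ss H0 B \<subseteq> uminus ` ss H0 (uminus ` B)"
    proof
      fix z assume "z \<in> ss H0 B"
      then obtain h b where h: "h \<in> H0" and b: "b \<in> B" and z: "z = h + b" unfolding ss_def by auto
      have "- h + - b \<in> ss H0 (uminus ` B)" using ngH[OF h] b by (intro ssI) auto
      moreover have "z = - (- h + - b)" using z by simp
      ultimately show "z \<in> uminus ` ss H0 (uminus ` B)" by blast
    qed
    show "uminus ` ss H0 (uminus ` B) \<subseteq> ss H0 B"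
    proof
      fix z assume "z \<in> uminus ` ss H0 (uminus ` B)"
      then obtain h b where h: "h \<in> H0" and b: "b \<in> B" and z: "z = - (h + - b)"
        unfolding ss_def by auto
      have "z = - h + b" using z by simp
      then show "z \<in> ss H0 B" using ngH[OF h] b ssI by metis
    qed
  qed
  have ne: "ss H0 B \<noteq> S"
  proof
    assume "ss H0 B = S"
    then have "uminus ` ss H0 (uminus ` B) = S" using eqs by simp
    then have "ss H0 (uminus ` B) = uminus ` S" by (metis neg_neg_img)
    then show False using HB negS_img by simp
  qed
  have "fv B H0 = fv (uminus ` B) H0" unfolding fv_def eqs card_neg ..
  then have "fv B H0 = kap B" using e kap_neg[OF g] by simp
  then have "frag B H0" using HS Hne ne by (simp add: frag_def adm_def)
  then show ?thesis using sg by blast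
qed

lemma ham:
  assumes g: "good B" and a: "adm B X"
  shows "\<exists>H0. add_subgroup H0 \<and> H0 \<subseteq> S \<and> ss H0 B \<noteq> S \<and> fv B H0 \<le> fv B X"
proof -
  obtain H0 where sg: "add_subgroup H0" and f: "frag B H0" using subgroup_frag[OF g] by blast
  have "fv B H0 \<le> fv B X" using f kap_le[OF a] by (simp add: frag_def)
  then show ?thesis using sg f by (auto simp: frag_def adm_def)
qed

end



lemma five_cases: fixes x :: 5 shows "x = 0 \<or> x = 1 \<or> x = 2 \<or> x = 3 \<or> x = 4"
proof (cases x rule: bit1_cases)
  case (of_int z)
  then have "z = 0 \<or> z = 1 \<or> z = 2 \<or> z = 3 \<or> z = 4" by auto
  then show ?thesis using of_int by auto
qed

lemma sub_smult:
  fixes H :: "(5^'n) set"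
  assumes sg: "add_subgroup H" and x: "x \<in> H"
  shows "c *s x \<in> H"
proof -
  have ad: "\<And>x y. x \<in> H \<Longrightarrow> y \<in> H \<Longrightarrow> x + y \<in> H" and z: "0 \<in> H"
    using sg by (auto simp: add_subgroup_def)
  have k: "of_nat k *s x \<in> H" for k
  proof (induct k)
    case 0 then show ?case using z by simp
  next
    case (Suc k)
    have "of_nat (Suc k) *s x = x + of_nat k *s x" by (simp add: vec_eq_iff algebra_simps)
    then show ?case using ad[OF x Suc] by simp
  qed
  have "c = of_nat 0 \<or> c = of_nat 1 \<or> c = of_nat 2 \<or> c = of_nat 3 \<or> c = of_nat 4"
    using five_cases[of c] by simp
  then obtain j where "c = of_nat j" by blast
  then show ?thesis using k[of j] by simp
qed

lemma coset_mem: "x \<in> coset g (H::'a::ab_group_add set) \<longleftrightarrow> x - g \<in> H"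
proof
  assume "x \<in> coset g H"
  then obtain h where "h \<in> H" "x = g + h" unfolding coset_def by auto
  then show "x - g \<in> H" by simp
next
  assume a: "x - g \<in> H"
  have "x = g + (x - g)" by simp
  then show "x \<in> coset g H" unfolding coset_def using a by blast
qed

lemma coset_eq:
  assumes sg: "add_subgroup H"
  shows "coset g1 H = coset g2 H \<longleftrightarrow> g1 - g2 \<in> H"
proof
  have z: "0 \<in> H" using sg by (simp add: add_subgroup_def)
  assume "coset g1 H = coset g2 H"
  moreover have "g1 \<in> coset g1 H" using z coset_mem[of g1 g1 H] by simp
  ultimately show "g1 - g2 \<in> H" using coset_mem[of g1 g2 H] by blast
next
  have ad: "\<And>x y. x \<in> H \<Longrightarrow> y \<in> H \<Longrightarrow> x + y \<in> H" and ng: "\<And>x. x \<in> H \<Longrightarrow> - x \<in> H"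
    using sg by (auto simp: add_subgroup_def)
  assume d: "g1 - g2 \<in> H"
  show "coset g1 H = coset g2 H"
  proof (rule set_eqI)
    fix x
    show "x \<in> coset g1 H \<longleftrightarrow> x \<in> coset g2 H"
    proof
      assume "x \<in> coset g1 H"
      then have a: "x - g1 \<in> H" using coset_mem by blast
      have e: "(x - g1) + (g1 - g2) = x - g2" by simp
      have "x - g2 \<in> H" using ad[OF a d] unfolding e .
      then show "x \<in> coset g2 H" using coset_mem by blast
    next
      assume "x \<in> coset g2 H"
      then have a: "x - g2 \<in> H" using coset_mem by blast
      have e: "(x - g2) + - (g1 - g2) = x - g1" by simp
      have "x - g1 \<in> H" using ad[OF a ng[OF d]] unfolding e .
      then show "x \<in> coset g1 H" using coset_mem by blast
    qed
  qed
qed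

lemma card_coset: "card (coset g (H::'a::ab_group_add set)) = card H"
  unfolding coset_def by (rule card_image) (auto simp: inj_on_def)

lemma cover:
  fixes H :: "(5^'n) set"
  assumes m: "maximal_proper_subgroup H" and p: "p \<notin> H"
  shows "\<exists>c. x - c *s p \<in> H"
proof -
  have sg: "add_subgroup H" using m by (simp add: maximal_proper_subgroup_def)
  have ad: "\<And>x y. x \<in> H \<Longrightarrow> y \<in> H \<Longrightarrow> x + y \<in> H" and ng: "\<And>x. x \<in> H \<Longrightarrow> - x \<in> H"
    and z: "0 \<in> H" using sg by (auto simp: add_subgroup_def)
  define K where "K = {x. \<exists>c. x - c *s p \<in> H}"
  have sK: "add_subgroup K"
    unfolding add_subgroup_def
  proof (intro conjI ballI)
    show "0 \<in> K" unfolding K_def using z by (auto intro!: exI[of _ 0])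
  next
    fix x y assume "x \<in> K" "y \<in> K"
    then obtain c d where c: "x - c *s p \<in> H" and d: "y - d *s p \<in> H" by (auto simp: K_def)
    have e: "(x + y) - (c + d) *s p = (x - c *s p) + (y - d *s p)"
      by (simp add: vec_eq_iff algebra_simps)
    have "(x + y) - (c + d) *s p \<in> H" unfolding e by (rule ad[OF c d])
    then show "x + y \<in> K" unfolding K_def by blast
  next
    fix x assume "x \<in> K"
    then obtain c where c: "x - c *s p \<in> H" by (auto simp: K_def)
    have e: "(- x) - (- c) *s p = - (x - c *s p)" by (simp add: vec_eq_iff algebra_simps)
    have "(- x) - (- c) *s p \<in> H" unfolding e by (rule ng[OF c])
    then show "- x \<in> K" unfolding K_def by blast
  qed
  have HK: "H \<subseteq> K" unfolding K_def by (auto intro!: exI[of _ 0])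
  have pK: "p \<in> K" unfolding K_def using z by (auto intro!: exI[of _ 1])
  have "K = H \<or> K = UNIV" using m sK HK by (simp add: maximal_proper_subgroup_def)
  then have "K = UNIV" using pK p by auto
  then show ?thesis unfolding K_def by auto
qed

lemma smult_notin:
  fixes H :: "(5^'n) set"
  assumes sg: "add_subgroup H" and p: "p \<notin> H" and c: "c \<noteq> 0"
  shows "c *s p \<notin> H"
proof
  assume cp: "c *s p \<in> H"
  obtain d :: 5 where d: "d * c = 1"
  proof -
    have "c = 1 \<or> c = 2 \<or> c = 3 \<or> c = 4" using five_cases[of c] c by auto
    then show ?thesis
    proof (elim disjE)
      assume "c = 1" then show ?thesis using that[of 1] by simp
    next
      assume "c = 2" then show ?thesis using that[of 3] by simp
    next
      assume "c = 3" then show ?thesis using that[of 2] by simp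
    next
      assume "c = 4" then show ?thesis using that[of 4] by simp
    qed
  qed
  have "d *s (c *s p) \<in> H" using sub_smult[OF sg cp] .
  moreover have "d *s (c *s p) = p" using d by (simp add: vector_smult_assoc)
  ultimately show False using p by simp
qed

lemma card_max_sub:
  fixes H :: "(5^'n) set"
  assumes m: "maximal_proper_subgroup H"
  shows "card H * 5 = 5 ^ CARD('n)"
proof -
  have sg: "add_subgroup H" using m by (simp add: maximal_proper_subgroup_def)
  obtain p where p: "p \<notin> H" using m by (auto simp: maximal_proper_subgroup_def)
  define C where "C = (\<lambda>c. coset (c *s p) H) ` (UNIV :: 5 set)"
  have inj: "inj (\<lambda>c::5. coset (c *s p) H)"
  proof (rule injI)
    fix c d :: 5 assume "coset (c *s p) H = coset (d *s p) H"
    then have m1: "c *s p - d *s p \<in> H" using coset_eq[OF sg] by blast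
    have e: "(c - d) *s p = c *s p - d *s p" by (simp add: vec_eq_iff algebra_simps)
    have "(c - d) *s p \<in> H" unfolding e by (rule m1)
    then have "c - d = 0" using smult_notin[OF sg p] by blast
    then show "c = d" by simp
  qed
  have cC: "card C = 5" unfolding C_def using inj by (simp add: card_image)
  have UC: "\<Union>C = UNIV"
  proof (rule set_eqI)
    fix x
    obtain c where "x - c *s p \<in> H" using cover[OF m p] by blast
    then have "x \<in> coset (c *s p) H" using coset_mem by blast
    then show "x \<in> \<Union>C \<longleftrightarrow> x \<in> UNIV" unfolding C_def by blast
  qed
  have "card H * card C = card (\<Union>C)"
  proof (rule card_partition)
    show "finite C" by simp
    show "finite (\<Union>C)" by simp
    show "\<And>c. c \<in> C \<Longrightarrow> card c = card H" unfolding C_def using card_coset by blast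
    show "\<And>c1 c2. c1 \<in> C \<Longrightarrow> c2 \<in> C \<Longrightarrow> c1 \<noteq> c2 \<Longrightarrow> c1 \<inter> c2 = {}"
    proof -
      fix c1 c2 assume "c1 \<in> C" "c2 \<in> C" "c1 \<noteq> c2"
      then obtain a b where a: "c1 = coset a H" and b: "c2 = coset b H" and ne: "coset a H \<noteq> coset b H"
        unfolding C_def by blast
      show "c1 \<inter> c2 = {}"
      proof (rule ccontr)
        assume "c1 \<inter> c2 \<noteq> {}"
        then obtain x where xa: "x - a \<in> H" and xb: "x - b \<in> H" using a b coset_mem by blast
        have ad: "\<And>x y. x \<in> H \<Longrightarrow> y \<in> H \<Longrightarrow> x + y \<in> H" and ng: "\<And>x. x \<in> H \<Longrightarrow> - x \<in> H"
          using sg by (auto simp: add_subgroup_def)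
        have e: "a - b = (x - b) + - (x - a)" by simp
        have "a - b \<in> H" unfolding e by (rule ad[OF xb ng[OF xa]])
        then show False using ne coset_eq[OF sg] by blast
      qed
    qed
  qed
  then show ?thesis using cC UC by simp
qed



lemma AR:
  fixes d t N :: nat
  assumes dt: "d dvd t" and dN: "d dvd 5 ^ N" and tl: "t < 5 ^ N" and tg: "2 * 5 ^ N < 5 * t"
  shows "2 * 5 ^ N \<le> 5 * (t - d)"
proof -
  have p5: "prime (5::nat)" by simp
  obtain i where i: "i \<le> N" and di: "d = 5 ^ i" using dN p5 by (auto simp: divides_primepow_nat)
  obtain m where m: "t = d * m" using dt by blast
  obtain k where k: "N = i + k" using i le_Suc_ex by blast
  have e: "(5::nat) ^ N = 5 ^ i * 5 ^ k" using k by (simp add: power_add)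
  have pi: "(0::nat) < 5 ^ i" by simp
  have m1: "m < 5 ^ k" using tl m di e pi by (metis mult_less_cancel1)
  have m2: "2 * 5 ^ k < 5 * m"
  proof -
    have "5 ^ i * (2 * 5 ^ k) < 5 ^ i * (5 * m)" using tg m di e by (simp add: algebra_simps)
    then show ?thesis using pi by (metis mult_less_cancel1)
  qed
  show ?thesis
  proof (cases k)
    case 0 then show ?thesis using m1 m2 by simp
  next
    case (Suc j)
    have "2 * 5 ^ j < m" using m2 Suc by simp
    then have "2 * 5 ^ k \<le> 5 * (m - 1)" using Suc by simp
    then have "5 ^ i * (2 * 5 ^ k) \<le> 5 ^ i * (5 * (m - 1))" by simp
    moreover have "t - d = d * (m - 1)" using m by (simp add: algebra_simps right_diff_distrib')
    ultimately show ?thesis using e di by (simp add: algebra_simps)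
  qed
qed

lemma ss_transl2:
  "ss ((\<lambda>x. x + a) ` X) ((\<lambda>y. y + b) ` Y) = (\<lambda>z. z + (a + b)) ` ss X Y"
proof (rule set_eqI)
  fix z
  show "z \<in> ss ((\<lambda>x. x + a) ` X) ((\<lambda>y. y + b) ` Y) \<longleftrightarrow> z \<in> (\<lambda>z. z + (a + b)) ` ss X Y"
  proof
    assume "z \<in> ss ((\<lambda>x. x + a) ` X) ((\<lambda>y. y + b) ` Y)"
    then obtain x y where x: "x \<in> X" and y: "y \<in> Y" and z: "z = (x + a) + (y + b)"
      unfolding ss_def by auto
    have "x + y \<in> ss X Y" using x y by (rule ssI)
    moreover have "z = (x + y) + (a + b)" using z by (simp add: algebra_simps)
    ultimately show "z \<in> (\<lambda>z. z + (a + b)) ` ss X Y" by blast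
  next
    assume "z \<in> (\<lambda>z. z + (a + b)) ` ss X Y"
    then obtain x y where x: "x \<in> X" and y: "y \<in> Y" and z: "z = (x + y) + (a + b)"
      unfolding ss_def by auto
    have "(x + a) + (y + b) \<in> ss ((\<lambda>x. x + a) ` X) ((\<lambda>y. y + b) ` Y)"
      using x y by (intro ssI) auto
    moreover have "z = (x + a) + (y + b)" using z by (simp add: algebra_simps)
    ultimately show "z \<in> ss ((\<lambda>x. x + a) ` X) ((\<lambda>y. y + b) ` Y)" by simp
  qed
qed

lemma SL:
  fixes H :: "(5^'n) set"
  assumes m: "maximal_proper_subgroup H"
    and X: "X \<subseteq> coset u H" and Y: "Y \<subseteq> coset v H" and Xne: "X \<noteq> {}"
    and Yb: "2 * card H < 5 * card Y"
  shows "ss X Y = coset (u + v) H \<or> 5 * card X + 2 * card H \<le> 5 * card (ss X Y)"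
proof -
  have sg: "add_subgroup H" using m by (simp add: maximal_proper_subgroup_def)
  have finH: "finite H" by simp
  interpret fsg H using sg finH by unfold_locales
  define X' where "X' = (\<lambda>x. x + - u) ` X"
  define Y' where "Y' = (\<lambda>y. y + - v) ` Y"
  have X'H: "X' \<subseteq> H" unfolding X'_def using X coset_mem by auto
  have Y'H: "Y' \<subseteq> H" unfolding Y'_def using Y coset_mem by auto
  have cX: "card X' = card X" unfolding X'_def by (rule card_transl)
  have cY: "card Y' = card Y" unfolding Y'_def by (rule card_transl)
  have X'ne: "X' \<noteq> {}" using Xne by (simp add: X'_def)
  have XX: "X = (\<lambda>x. x + u) ` X'" unfolding X'_def by (simp add: image_image)
  have YY: "Y = (\<lambda>y. y + v) ` Y'" unfolding Y'_def by (simp add: image_image)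
  have eqs: "ss X Y = (\<lambda>z. z + (u + v)) ` ss X' Y'"
    unfolding XX YY by (rule ss_transl2)
  have cs: "card (ss X Y) = card (ss X' Y')" unfolding eqs by (rule card_transl)
  show ?thesis
  proof (cases "ss X' Y' = H")
    case True
    have "ss X Y = coset (u + v) H" unfolding eqs True coset_def by (simp add: add.commute)
    then show ?thesis by simp
  next
    case False
    have Y'ne: "Y' \<noteq> {}" using Yb cY by auto
    have Y'ne2: "Y' \<noteq> H"
    proof
      assume YH: "Y' = H"
      obtain x where x: "x \<in> X'" using X'ne by auto
      have "H \<subseteq> ss X' Y'"
      proof
        fix h assume h: "h \<in> H"
        have "h - x \<in> H" using h x X'H diffS by auto
        then have "x + (h - x) \<in> ss X' Y'" using x YH by (intro ssI) auto
        then show "h \<in> ss X' Y'" by simp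
      qed
      moreover have "ss X' Y' \<subseteq> H" using ss_sub[OF X'H Y'H] .
      ultimately show False using False by blast
    qed
    have g: "good Y'" using Y'H Y'ne Y'ne2 by (simp add: good_def)
    have a: "adm Y' X'" using X'H X'ne False by (simp add: adm_def)
    obtain H0 where sg0: "add_subgroup H0" and H0H: "H0 \<subseteq> H" and ne0: "ss H0 Y' \<noteq> H"
      and fvle: "fv Y' H0 \<le> fv Y' X'" using ham[OF g a] by blast
    have fin0: "finite H0" using H0H finS by auto
    have z0: "0 \<in> H0" using sg0 by (simp add: add_subgroup_def)
    have ad0: "\<And>x y. x \<in> H0 \<Longrightarrow> y \<in> H0 \<Longrightarrow> x + y \<in> H0" using sg0 by (simp add: add_subgroup_def)
    define T where "T = ss H0 Y'"
    have TH: "T \<subseteq> H" unfolding T_def using ss_sub[OF H0H Y'H] .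
    have finT: "finite T" using TH finS by auto
    have d1: "card H0 dvd card T"
    proof (rule card_dvd_periodic[OF sg0 fin0 finT], intro ballI)
      fix t h assume t: "t \<in> T" and h: "h \<in> H0"
      obtain h1 y where h1: "h1 \<in> H0" and y: "y \<in> Y'" and tt: "t = h1 + y"
        using t unfolding T_def ss_def by auto
      have "(h1 + h) + y \<in> T" unfolding T_def using ad0[OF h1 h] y by (rule ssI)
      then show "t + h \<in> T" using tt by (simp add: algebra_simps)
    qed
    have d2: "card H0 dvd card H"
      by (rule card_dvd_periodic[OF sg0 fin0 finH]) (use H0H addS in auto)
    have cH: "card H * 5 = 5 ^ CARD('n)" by (rule card_max_sub[OF m])
    have n1: "CARD('n) \<ge> 1" by (simp add: Suc_leI)
    have cH2: "card H = 5 ^ (CARD('n) - 1)"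
    proof -
      have "(5::nat) ^ CARD('n) = 5 ^ (CARD('n) - 1) * 5" using n1
        by (metis Suc_diff_1 less_le_trans power_Suc2 zero_less_one)
      then show ?thesis using cH by simp
    qed
    have tl: "card T < card H" using TH ne0 finH unfolding T_def by (simp add: psubset_card_mono)
    have "card Y' \<le> card T"
    proof -
      have "ss {0} Y' \<subseteq> T" unfolding T_def using z0 by (intro ss_mono) auto
      then show ?thesis using finT card_mono card_ss_single by metis
    qed
    then have tg: "2 * card H < 5 * card T" using Yb cY by simp
    have ar: "2 * card H \<le> 5 * (card T - card H0)"
      using AR[OF d1 _ _ _] d2 tl tg cH2 by metis
    have "card H0 \<le> card T"
    proof -
      obtain y where "y \<in> Y'" using Y'ne by auto
      then have "(\<lambda>h. h + y) ` H0 \<subseteq> T" unfolding T_def by (auto intro: ssI)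
      then show ?thesis using finT card_mono card_transl by metis
    qed
    then have "int (card T) - int (card H0) \<le> int (card (ss X' Y')) - int (card X')"
      using fvle unfolding fv_def T_def by simp
    then show ?thesis using ar cs cX \<open>card H0 \<le> card T\<close> by linarith
  qed
qed



lemma card_H:
  fixes H :: "(5^'n) set"
  assumes m: "maximal_proper_subgroup H"
  shows "card H = 5 ^ (CARD('n) - 1)"
proof -
  have cH: "card H * 5 = 5 ^ CARD('n)" by (rule card_max_sub[OF m])
  have n1: "CARD('n) \<ge> 1" by (simp add: Suc_leI)
  have "(5::nat) ^ CARD('n) = 5 ^ (CARD('n) - 1) * 5" using n1
    by (metis Suc_diff_1 less_le_trans power_Suc2 zero_less_one)
  then show ?thesis using cH by simp
qed

lemma id1: fixes a b :: 5 shows "a + a - b = - (b - 2 * a)"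
  by (simp add: algebra_simps)
lemma id2: fixes a b :: 5 shows "b + b - a = 2 * (b - 3 * a)"
  using five_cases[of a] five_cases[of b] by auto
lemma id3: fixes a b :: 5 shows "a + b = b - 4 * a"
  using five_cases[of a] five_cases[of b] by auto
lemma id4: fixes x a b :: 5 shows "x - (b + b) = (x - 3 * a) - 2 * (b - 4 * a)"
proof -
  have "(x - 3 * a) - 2 * (b - 4 * a) = x - (b + b) + 5 * a" by (simp add: algebra_simps)
  also have "(5::5) = 0" by simp
  finally show ?thesis by simp
qed

lemma f5: fixes a :: 5 shows "5 * a = 0" "a * 5 = 0"
  using five_cases[of a] by auto

lemma smult2: fixes p :: "5^'n" shows "2 *s p = p + p"
  by (simp add: vec_eq_iff algebra_simps)

theorem proposition3:
  fixes A H :: "(5 ^ 'n) set"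
  assumes "sum_free A"
    and "real (card A) > 3/2 * 5 ^ (CARD('n) - 1)"
    and "maximal_proper_subgroup H"
    and "\<forall>g. real (card (A \<inter> coset g H)) < 1/2 * real (card H)"
  shows "\<forall>g1 g2. real (card (A \<inter> coset g1 H)) > 2/5 * real (card H) \<and>
                 real (card (A \<inter> coset g2 H)) > 2/5 * real (card H) \<longrightarrow>
                 coset g1 H = coset g2 H"
proof (intro allI impI)
  fix g1 g2
  assume big: "real (card (A \<inter> coset g1 H)) > 2/5 * real (card H) \<and>
               real (card (A \<inter> coset g2 H)) > 2/5 * real (card H)"
  have sf: "sum_free A" and m: "maximal_proper_subgroup H" using assms by auto
  have sg: "add_subgroup H" using m by (simp add: maximal_proper_subgroup_def)
  have ad: "\<And>x y. x \<in> H \<Longrightarrow> y \<in> H \<Longrightarrow> x + y \<in> H" and ng: "\<And>x. x \<in> H \<Longrightarrow> - x \<in> H"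
    and z: "0 \<in> H" using sg by (auto simp: add_subgroup_def)
  define h where "h = card H"
  define Z where "Z g = A \<inter> coset g H" for g
  have hH: "h = 5 ^ (CARD('n) - 1)" unfolding h_def by (rule card_H[OF m])
  have small: "2 * card (Z g) < h" for g
  proof -
    have "real (card (Z g)) < 1/2 * real h" using assms(4) by (simp add: Z_def h_def)
    then show ?thesis by linarith
  qed
  have b1: "2 * h < 5 * card (Z g1)" and b2: "2 * h < 5 * card (Z g2)"
    using big by (simp_all add: Z_def h_def)
  have hA: "3 * h < 2 * card A"
  proof -
    have "real h = 5 ^ (CARD('n) - 1)" using hH by simp
    then show ?thesis using assms(2) by linarith
  qed
  have SF: "5 * card (Z (u + v)) + 5 * card X \<le> 3 * h"
    if X: "X \<subseteq> Z u" and Y: "Y \<subseteq> Z v" and Xne: "X \<noteq> {}" and Yb: "2 * h < 5 * card Y"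
    for u v X Y
  proof -
    have XA: "X \<subseteq> A" and XC: "X \<subseteq> coset u H" using X by (auto simp: Z_def)
    have YA: "Y \<subseteq> A" and YC: "Y \<subseteq> coset v H" using Y by (auto simp: Z_def)
    have disj: "ss X Y \<inter> A = {}"
    proof (rule ccontr)
      assume "ss X Y \<inter> A \<noteq> {}"
      then obtain x y where "x \<in> X" "y \<in> Y" "x + y \<in> A" unfolding ss_def by auto
      then show False using sf XA YA unfolding sum_free_def by blast
    qed
    have inC: "ss X Y \<subseteq> coset (u + v) H"
    proof
      fix w assume "w \<in> ss X Y"
      then obtain x y where x: "x \<in> X" and y: "y \<in> Y" and w: "w = x + y" unfolding ss_def by auto
      have "x - u \<in> H" using x XC coset_mem by blast
      moreover have "y - v \<in> H" using y YC coset_mem by blast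
      ultimately have "(x - u) + (y - v) \<in> H" by (rule ad)
      moreover have "(x - u) + (y - v) = w - (u + v)" using w by simp
      ultimately show "w \<in> coset (u + v) H" using coset_mem by metis
    qed
    have cX: "card X \<le> card (Z u)" using X by (simp add: card_mono)
    have sm: "2 * card (Z u) < h" by (rule small)
    from SL[OF m XC YC Xne] Yb
    consider (full) "ss X Y = coset (u + v) H" | (gr) "5 * card X + 2 * card H \<le> 5 * card (ss X Y)"
      unfolding h_def by blast
    then show ?thesis
    proof cases
      case full
      then have "Z (u + v) = {}" using disj by (auto simp: Z_def)
      then show ?thesis using cX sm by simp
    next
      case gr
      have "Z (u + v) \<inter> ss X Y = {}" using disj by (auto simp: Z_def)
      moreover have "Z (u + v) \<union> ss X Y \<subseteq> coset (u + v) H" using inC by (auto simp: Z_def)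
      ultimately have "card (Z (u + v)) + card (ss X Y) \<le> h"
        unfolding h_def using card_coset[of "u + v" H] card_mono card_Un_disjoint
        by (metis finite)
      then show ?thesis using gr unfolding h_def by linarith
    qed
  qed
  have ne1: "Z g1 \<noteq> {}" using b1 by auto
  have ne2: "Z g2 \<noteq> {}" using b2 by auto
  have Zeq: "Z a = Z b" if ab: "a - b \<in> H" for a b
  proof -
    have "coset a H = coset b H" using coset_eq[OF sg] ab by blast
    then show ?thesis unfolding Z_def by simp
  qed
  show "coset g1 H = coset g2 H"
  proof (rule ccontr)
    assume neq: "coset g1 H \<noteq> coset g2 H"
    have contra: False if "5 * card (Z g2) + 5 * card (Z g1) \<le> 3 * h \<or> 5 * card (Z g1) + 5 * card (Z g2) \<le> 3 * h"
      using that b1 b2 by linarith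
    show False
    proof (cases "g1 \<in> H")
      case True
      have "Z (g1 + g2) = Z g2" by (rule Zeq) (use True in simp)
      then show False using SF[of "Z g1" g1 "Z g2" g2] ne1 b2 contra by simp
    next
      case g1H: False
      show False
      proof (cases "g2 \<in> H")
        case True
        have "Z (g2 + g1) = Z g1" by (rule Zeq) (use True in simp)
        then show False using SF[of "Z g2" g2 "Z g1" g1] ne2 b1 contra by simp
      next
        case g2H: False
        obtain c where c: "g2 - c *s g1 \<in> H" using cover[OF m g1H] by blast
        have "c = 0 \<or> c = 1 \<or> c = 2 \<or> c = 3 \<or> c = 4" by (rule five_cases)
        then show False
        proof (elim disjE)
          assume "c = 0" then show False using c g2H by simp
        next
          assume "c = 1"
          then have "g2 - g1 \<in> H" using c by simp
          then show False using neq coset_eq[OF sg] by blast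
        next
          assume c2: "c = 2"
          have e: "(g1 + g1) - g2 = - (g2 - 2 *s g1)" by (simp add: vec_eq_iff id1 f5)
          have "(g1 + g1) - g2 \<in> H" unfolding e by (rule ng) (use c c2 in simp)
          then have "Z (g1 + g1) = Z g2" by (rule Zeq)
          then show False using SF[of "Z g1" g1 "Z g1" g1] ne1 b1 contra by simp
        next
          assume c3: "c = 3"
          have e: "(g2 + g2) - g1 = 2 *s (g2 - 3 *s g1)" by (simp add: vec_eq_iff algebra_simps f5)
          have "(g2 + g2) - g1 \<in> H" unfolding e by (rule sub_smult[OF sg]) (use c c3 in simp)
          then have "Z (g2 + g2) = Z g1" by (rule Zeq)
          then show False using SF[of "Z g2" g2 "Z g2" g2] ne2 b2 contra by simp
        next
          assume c4: "c = 4"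
          have q: "g2 - 4 *s g1 \<in> H" using c c4 by simp
          have e: "(g1 + g2) - 0 = g2 - 4 *s g1" by (simp add: vec_eq_iff id3 f5)
          have Z0: "Z (g1 + g2) = Z 0" by (rule Zeq) (simp only: e q)
          have s1: "5 * card (Z 0) + 5 * card (Z g1) \<le> 3 * h"
            using SF[of "Z g1" g1 "Z g2" g2] ne1 b2 Z0 by simp
          have s2: "5 * card (Z (g1 + g1)) + 5 * card (Z g1) \<le> 3 * h"
            using SF[of "Z g1" g1 "Z g1" g1] ne1 b1 by simp
          have s3: "5 * card (Z (g2 + g2)) + 5 * card (Z g2) \<le> 3 * h"
            using SF[of "Z g2" g2 "Z g2" g2] ne2 b2 by simp
          have cov: "A \<subseteq> Z 0 \<union> Z g1 \<union> Z g2 \<union> Z (g1 + g1) \<union> Z (g2 + g2)"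
          proof
            fix x assume xA: "x \<in> A"
            obtain d where d: "x - d *s g1 \<in> H" using cover[OF m g1H] by blast
            have "d = 0 \<or> d = 1 \<or> d = 2 \<or> d = 3 \<or> d = 4" by (rule five_cases)
            then have "x - 0 \<in> H \<or> x - g1 \<in> H \<or> x - g2 \<in> H \<or> x - (g1 + g1) \<in> H \<or> x - (g2 + g2) \<in> H"
            proof (elim disjE)
              assume "d = 0" then show ?thesis using d by simp
            next
              assume "d = 1" then show ?thesis using d by simp
            next
              assume "d = 2" then show ?thesis using d by (simp add: smult2)
            next
              assume d3: "d = 3"
              have e: "x - (g2 + g2) = (x - 3 *s g1) + - (2 *s (g2 - 4 *s g1))"
                by (simp add: vec_eq_iff algebra_simps f5)
              have "x - (g2 + g2) \<in> H" unfolding e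
                by (rule ad[OF _ ng[OF sub_smult[OF sg q]]]) (use d d3 in simp)
              then show ?thesis by simp
            next
              assume d4: "d = 4"
              have e: "x - g2 = (x - 4 *s g1) + - (g2 - 4 *s g1)" by simp
              have "x - g2 \<in> H" unfolding e by (rule ad[OF _ ng[OF q]]) (use d d4 in simp)
              then show ?thesis by simp
            qed
            then show "x \<in> Z 0 \<union> Z g1 \<union> Z g2 \<union> Z (g1 + g1) \<union> Z (g2 + g2)"
              using xA coset_mem unfolding Z_def by blast
          qed
          have "card A \<le> card (Z 0 \<union> Z g1 \<union> Z g2 \<union> Z (g1 + g1) \<union> Z (g2 + g2))"
            using cov by (simp add: card_mono)
          also have "\<dots> \<le> card (Z 0) + card (Z g1) + card (Z g2) + card (Z (g1 + g1)) + card (Z (g2 + g2))"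
            by (meson add_le_mono card_Un_le le_trans order_refl)
          finally have "card A \<le> card (Z 0) + card (Z g1) + card (Z g2) + card (Z (g1 + g1)) + card (Z (g2 + g2))" .
          then show False using s1 s2 s3 b1 hA by linarith
        qed
      qed
    qed
  qed
qed

end
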